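(* For every $d$ with $0\le d\le\rho(m)-1$ and every integer $t$ with $L_1(d)+h-\rho(m)+d+1\le t\le L_1(d)+h-1$, we have $z(t,d)=y(t)$.
   Context: For $u\in\mathbb{R}$ let $\mathbf 1[u]=1$ if $u\ge 0$ and $\mathbf 1[u]=0$ if $u<0$. Let $m$ be a positive integer and let $\rho(m)$ denote the number of primes $p$ with $2m<p<3m$; assume $\rho(m)\ge 2$. List these primes as $p_0>p_1>\dots>p_{\rho(m)-1}$ and put $\alpha_i=3m-p_i$. Let $k=(6m-1)\rho(m)$, $\mu_i=\lfloor k/p_i\rfloor$, $\beta_i=k-p_i\mu_i$. Define weights $\bar a_j$, $1\le j\le k$: if $\rho(m)$ is even, $\bar a_j=2$ if $j=\ell p_i$ for some $i$ and some $\ell$ with $1\le \ell\le 3\rho(m)/2$, $\bar a_j=-2$ if $j=\ell p_i$ with $3\rho(m)/2<\ell\le 2\rho(m)$, and $\bar a_j=0$ otherwise; if $\rho(m)$ is odd, $\bar a_j=2$ if $j=\ell p_i$ with $1\le\ell\le (3\rho(m)-1)/2$, $\bar a_j=-2$ if $j=\ell p_i$ with $(3\rho(m)+1)/2\le \ell\le 2\rho(m)-2$, $\bar a_j=-1$ if $j=\ell p_i$ with $\ell\in\{2\rho(m)-1,2\rho(m)\}$, and $\bar a_j=0$ otherwise (well defined since the sets $\{\ell p_i:1\le\ell\le2\rho(m)\}$ are pairwise disjoint). Let $\bar\theta=2\rho(m)$. For each $i$ define $x^{\alpha_i}(t)$ for $0\le t\le k-1$ by $x^{\alpha_i}(t)=1$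 if $t=\beta_i+\ell p_i$ for some $0\le \ell\le\mu_i-1$ and $x^{\alpha_i}(t)=0$ otherwise, and for $t\ge k$ by $x^{\alpha_i}(t)=\mathbf 1\big[\sum_{j=1}^k \bar a_j x^{\alpha_i}(t-j)-\bar\theta\big]$. Let $h=\rho(m)k$. For $1\le f\le h$ let $b_f=\bar a_j$ if $f=\rho(m)j$ with $1\le j\le k$, and $b_f=0$ otherwise. Define $(y(n))_{n\ge0}$ by $y(\rho(m)j+i)=x^{\alpha_i}(1+j)$ for $0\le j\le k-1$, $0\le i\le\rho(m)-1$, and $y(n)=\mathbf 1\big[\sum_{f=1}^h b_f y(n-f)-\bar\theta\big]$ for $n\ge h$. Let $L_1(d)=\rho(m)\cdot\mathrm{lcm}(p_0,\dots,p_d)$ for $0\le d\le\rho(m)-1$. For $0\le d\le\rho(m)-1$ let $B_0(d)=\{f\in\mathbb Z:\ 1\le f\le h-d,\ y(h+L_1(d)-\rho(m)-f)=1\}$, $B_{\ell+1}(d)=\{1+f: f\in B_\ell(d)\}$ for $\ell\ge0$, $A(d)=\bigcup_{\ell=0}^{d}B_\ell(d)$, and $Tot(d)=|B_0(d)|$. Fix a real number $\lambda$ with $-1\le\lambda<0$. Put $\beta(d)=\lambda/Tot(d)$, $\xi(d)=\lambda-\beta(d)/8$, $\theta_2(d)=\bar\theta+\xi(d)$, and for $1\le f\le h$ let $c(f,d)=b_f+\beta(d)$ if $f\in A(d)$ and $c(f,d)=b_f$ otherwise. Define $(z(n,d))_{n\ge0}$ by $z(n,d)=y(n)$ for $0\le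 n\le h-1$ and $z(n,d)=\mathbf 1\big[\sum_{f=1}^h c(f,d)\,z(n-f,d)-\theta_2(d)\big]$ for $n\ge h$. *)

theory Defs
  imports Complex_Main "HOL-Computational_Algebra.Primes"
begin

definition step :: "real \<Rightarrow> real" where
  "step u = (if u \<ge> 0 then 1 else 0)"

definition primeset :: "nat \<Rightarrow> nat set" where
  "primeset m = {p. prime p \<and> 2*m < p \<and> p < 3*m}"

definition rho :: "nat \<Rightarrow> nat" where
  "rho m = card (primeset m)"

definition pr :: "nat \<Rightarrow> nat \<Rightarrow> nat" where
  "pr m i = rev (sorted_list_of_set (primeset m)) ! i"

definition alpha :: "nat \<Rightarrow> nat \<Rightarrow> nat" where
  "alpha m i = 3*m - pr m i"

definition kk :: "nat \<Rightarrow> nat" where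
  "kk m = (6*m - 1) * rho m"

definition mu :: "nat \<Rightarrow> nat \<Rightarrow> nat" where
  "mu m i = kk m div pr m i"

definition beta0 :: "nat \<Rightarrow> nat \<Rightarrow> nat" where
  "beta0 m i = kk m - pr m i * mu m i"

text \<open>weight attached to the multiple l * p_i\<close>
definition wt :: "nat \<Rightarrow> nat \<Rightarrow> real" where
  "wt m l = (if even (rho m) then
               (if 1 \<le> l \<and> 2 * l \<le> 3 * rho m then 2
                else if 3 * rho m < 2 * l \<and> l \<le> 2 * rho m then -2 else 0)
             else
               (if 1 \<le> l \<and> 2 * l \<le> 3 * rho m - 1 then 2
                else if 3 * rho m + 1 \<le> 2 * l \<and> l + 2 \<le> 2 * rho m then -2
                else if l = 2 * rho m - 1 \<or> l = 2 * rho m then -1 else 0))"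

definition abar :: "nat \<Rightarrow> nat \<Rightarrow> real" where
  "abar m j = (if \<exists>i l. i < rho m \<and> 1 \<le> l \<and> l \<le> 2 * rho m \<and> j = l * pr m i
               then wt m (SOME l. \<exists>i. i < rho m \<and> 1 \<le> l \<and> l \<le> 2 * rho m \<and> j = l * pr m i)
               else 0)"

definition thetabar :: "nat \<Rightarrow> real" where
  "thetabar m = 2 * real (rho m)"

function xs :: "nat \<Rightarrow> nat \<Rightarrow> nat \<Rightarrow> real" where
  "xs m i t = (if t < kk m then
                 (if \<exists>l. l < mu m i \<and> t = beta0 m i + l * pr m i then 1 else 0)
               else step ((\<Sum>j\<in>{1..kk m}. abar m j * xs m i (t - j)) - thetabar m))"
  by auto
termination by (relation "measure (\<lambda>(m,i,t). t)") auto

definition hh :: "nat \<Rightarrow> nat" where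
  "hh m = rho m * kk m"

definition bb :: "nat \<Rightarrow> nat \<Rightarrow> real" where
  "bb m f = (if rho m dvd f \<and> 1 \<le> f div rho m \<and> f div rho m \<le> kk m
             then abar m (f div rho m) else 0)"

function ys :: "nat \<Rightarrow> nat \<Rightarrow> real" where
  "ys m n = (if n < hh m then xs m (n mod rho m) (1 + n div rho m)
             else step ((\<Sum>f\<in>{1..hh m}. bb m f * ys m (n - f)) - thetabar m))"
  by auto
termination by (relation "measure (\<lambda>(m,n). n)") auto

definition L1 :: "nat \<Rightarrow> nat \<Rightarrow> nat" where
  "L1 m d = rho m * Lcm (pr m ` {..d})"

definition B0 :: "nat \<Rightarrow> nat \<Rightarrow> nat set" where
  "B0 m d = {f. 1 \<le> f \<and> f \<le> hh m - d \<and> ys m (hh m + L1 m d - rho m - f) = 1}"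

definition Bl :: "nat \<Rightarrow> nat \<Rightarrow> nat \<Rightarrow> nat set" where
  "Bl m d l = (\<lambda>f. f + l) ` B0 m d"

definition AA :: "nat \<Rightarrow> nat \<Rightarrow> nat set" where
  "AA m d = (\<Union>l\<in>{0..d}. Bl m d l)"

definition Tot :: "nat \<Rightarrow> nat \<Rightarrow> nat" where
  "Tot m d = card (B0 m d)"

definition betad :: "nat \<Rightarrow> real \<Rightarrow> nat \<Rightarrow> real" where
  "betad m lam d = lam / real (Tot m d)"

definition xid :: "nat \<Rightarrow> real \<Rightarrow> nat \<Rightarrow> real" where
  "xid m lam d = lam - betad m lam d / 8"

definition theta2 :: "nat \<Rightarrow> real \<Rightarrow> nat \<Rightarrow> real" where
  "theta2 m lam d = thetabar m + xid m lam d"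

definition cc :: "nat \<Rightarrow> real \<Rightarrow> nat \<Rightarrow> nat \<Rightarrow> real" where
  "cc m lam f d = (if f \<in> AA m d then bb m f + betad m lam d else bb m f)"

function zs :: "nat \<Rightarrow> real \<Rightarrow> nat \<Rightarrow> nat \<Rightarrow> real" where
  "zs m lam n d = (if n < hh m then ys m n
                   else step ((\<Sum>f\<in>{1..hh m}. cc m lam f d * zs m lam (n - f) d) - theta2 m lam d))"
  by auto
termination by (relation "measure (\<lambda>(m,lam,n,d). n)") auto

end

theory Submission imports Defs begin

declare xs.simps[simp del] ys.simps[simp del] zs.simps[simp del]

lemma primeset_fin: "finite (primeset m)"
  unfolding primeset_def by (rule finite_subset[of _ "{..<3*m}"]) auto

lemma pr_in: "i < rho m \<Longrightarrow> pr m i \<in> primeset m"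
proof -
  assume "i < rho m"
  let ?xs = "rev (sorted_list_of_set (primeset m))"
  have "length ?xs = rho m" by (simp add: rho_def primeset_fin)
  then have "?xs ! i \<in> set ?xs" using \<open>i < rho m\<close> by (metis nth_mem)
  then show ?thesis by (simp add: pr_def primeset_fin)
qed

lemma pr_inj: "i < rho m \<Longrightarrow> j < rho m \<Longrightarrow> pr m i = pr m j \<Longrightarrow> i = j"
proof -
  assume a: "i < rho m" "j < rho m" "pr m i = pr m j"
  let ?xs = "rev (sorted_list_of_set (primeset m))"
  have "length ?xs = rho m" by (simp add: rho_def primeset_fin)
  moreover have "distinct ?xs" by simp
  ultimately show ?thesis using a unfolding pr_def by (simp add: nth_eq_iff_index_eq)
qed

lemma pr_props: assumes "i < rho m"
  shows "prime (pr m i)" "2*m < pr m i" "pr m i < 3*m"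
  using pr_in[OF assms] by (auto simp: primeset_def)

lemma primeset_odd: "p \<in> primeset m \<Longrightarrow> odd p"
proof -
  assume "p \<in> primeset m"
  then have "prime p" "2*m < p" "p < 3*m" unfolding primeset_def by auto
  then have "p > 2" by linarith
  then show ?thesis using prime_odd_nat \<open>prime p\<close> by blast
qed

lemma rho_bound: "2 * rho m \<le> m"
proof -
  have sub: "(\<lambda>p. (p - (2*m+1)) div 2) ` primeset m \<subseteq> {..<m div 2}"
  proof
    fix x assume "x \<in> (\<lambda>p. (p - (2*m+1)) div 2) ` primeset m"
    then obtain p where p: "p \<in> primeset m" "x = (p - (2*m+1)) div 2" by auto
    then have "p < 3*m" "2*m < p" "odd p" by (auto simp: primeset_def primeset_odd)
    then show "x \<in> {..<m div 2}" using p by (cases "even m"; auto elim!: oddE evenE)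
  qed
  have inj: "inj_on (\<lambda>p. (p - (2*m+1)) div 2) (primeset m)"
  proof (rule inj_onI)
    fix p q assume pq: "p \<in> primeset m" "q \<in> primeset m" "(p - (2*m+1)) div 2 = (q - (2*m+1)) div 2"
    have "odd p" "odd q" using pq primeset_odd by auto
    have "2*m < p" "2*m < q" using pq unfolding primeset_def by auto
    then show "p = q" using pq(3) \<open>odd p\<close> \<open>odd q\<close> by (auto elim!: oddE) 
  qed
  have "rho m = card ((\<lambda>p. (p - (2*m+1)) div 2) ` primeset m)"
    unfolding rho_def using card_image[OF inj] by simp
  also have "\<dots> \<le> m div 2" using card_mono[OF _ sub] by simp
  finally show ?thesis by linarith
qed


lemma pr_big: "i < rho m \<Longrightarrow> 2 * rho m < pr m i"
  using rho_bound[of m] pr_props(2)[of i m] by linarith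

lemma pr_uniq:
  assumes "i < rho m" "i' < rho m" "1 \<le> l" "l \<le> 2*rho m" "1 \<le> l'" "l' \<le> 2*rho m"
    and "l * pr m i = l' * pr m i'"
  shows "i = i' \<and> l = l'"
proof (cases "i = i'")
  case True
  then show ?thesis using assms pr_props(1)[OF assms(1)] by (auto dest: prime_gt_0_nat)
next
  case False
  have pi: "prime (pr m i)" "prime (pr m i')" using assms pr_props by auto
  have ne: "pr m i \<noteq> pr m i'" using False pr_inj assms by blast
  have "pr m i dvd l' * pr m i'" using assms(7) by (metis dvd_triv_right)
  then have "pr m i dvd l' \<or> pr m i dvd pr m i'" using pi(1) prime_dvd_mult_iff by blast
  moreover have "\<not> pr m i dvd pr m i'" using ne pi primes_dvd_imp_eq by blast
  ultimately have "pr m i dvd l'" by blast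
  then have "pr m i \<le> l'" using assms(5) by (auto dest: dvd_imp_le)
  then show ?thesis using pr_big[OF assms(1)] assms(6) by linarith
qed

lemma abar_at:
  assumes "i < rho m" "1 \<le> l" "l \<le> 2*rho m"
  shows "abar m (l * pr m i) = wt m l"
proof -
  have ex: "\<exists>i' l'. i' < rho m \<and> 1 \<le> l' \<and> l' \<le> 2 * rho m \<and> l * pr m i = l' * pr m i'"
    using assms by blast
  have "(SOME l'. \<exists>i'. i' < rho m \<and> 1 \<le> l' \<and> l' \<le> 2 * rho m \<and> l * pr m i = l' * pr m i') = l"
  proof (rule some_equality)
    show "\<exists>i'. i' < rho m \<and> 1 \<le> l \<and> l \<le> 2 * rho m \<and> l * pr m i = l * pr m i'" using assms by blast
  next
    fix l' assume "\<exists>i'. i' < rho m \<and> 1 \<le> l' \<and> l' \<le> 2 * rho m \<and> l * pr m i = l' * pr m i'"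
    then obtain i' where "i' < rho m" "1 \<le> l'" "l' \<le> 2 * rho m" "l * pr m i = l' * pr m i'" by blast
    then show "l' = l" using pr_uniq[of i m i' l l'] assms by auto
  qed
  then show ?thesis unfolding abar_def using ex by simp
qed

lemma abar_out:
  assumes "\<not> (\<exists>i l. i < rho m \<and> 1 \<le> l \<and> l \<le> 2*rho m \<and> j = l * pr m i)"
  shows "abar m j = 0"
  using assms unfolding abar_def by auto

lemma mult_le_kk:
  assumes "i < rho m" "l \<le> 2*rho m"
  shows "l * pr m i \<le> kk m"
proof -
  have "2 * pr m i \<le> 6*m - 1" using pr_props(3)[OF assms(1)] by linarith
  have "l * pr m i \<le> (2*rho m) * pr m i" using assms(2) by (rule mult_right_mono) simp
  also have "\<dots> = rho m * (2 * pr m i)" by simp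
  also have "\<dots> \<le> rho m * (6*m - 1)" using \<open>2 * pr m i \<le> 6*m - 1\<close> by (rule mult_left_mono) simp
  finally show ?thesis unfolding kk_def by (simp add: mult.commute)
qed

lemma kk_lt:
  assumes "i < rho m" "j < rho m"
  shows "kk m < pr m i * pr m j"
proof -
  have a: "2*m + 1 \<le> pr m i" "2*m+1 \<le> pr m j" using pr_props(2) assms by (auto simp: Suc_le_eq)
  have "2 * kk m = (6*m-1) * (2*rho m)" unfolding kk_def by simp
  also have "\<dots> \<le> (6*m-1) * m" using rho_bound[of m] by (rule mult_left_mono) simp
  also have "\<dots> \<le> 6*m*m" by simp
  also have "\<dots> < 2 * ((2*m+1)*(2*m+1))" by (simp add: algebra_simps)
  also have "\<dots> \<le> 2 * (pr m i * pr m j)" using mult_mono[OF a] by simp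
  finally show ?thesis by simp
qed

lemma wt_le2: "wt m l \<le> 2"
  unfolding wt_def by auto

lemma sum_const_ivl: "(\<And>l. l \<in> {a..b} \<Longrightarrow> f l = c) \<Longrightarrow> (\<Sum>l\<in>{a..b::nat}. f l) = real (b + 1 - a) * c"
  by (simp add: sum.cong[of "{a..b}" "{a..b}" f "\<lambda>_. c"])

lemma wt_sum:
  assumes "rho m \<ge> 2"
  shows "(\<Sum>l\<in>{1..2*rho m}. wt m l) = 2 * real (rho m)"
proof (cases "even (rho m)")
  case True
  then obtain s where s: "rho m = 2*s" by (auto elim: evenE)
  have "(\<Sum>l\<in>{1..2*rho m}. wt m l) = (\<Sum>l\<in>{1..3*s + s}. wt m l)" using s by (simp add: algebra_simps)
  also have "\<dots> = (\<Sum>l\<in>{1..3*s}. wt m l) + (\<Sum>l\<in>{3*s+1..3*s+s}. wt m l)"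
    by (rule sum.ub_add_nat) simp
  also have "(\<Sum>l\<in>{1..3*s}. wt m l) = real (3*s+1-1) * 2"
    by (rule sum_const_ivl) (use True s in \<open>auto simp: wt_def\<close>)
  also have "(\<Sum>l\<in>{3*s+1..3*s+s}. wt m l) = real (3*s+s+1-(3*s+1)) * (-2)"
    by (rule sum_const_ivl) (use True s in \<open>auto simp: wt_def\<close>)
  finally show ?thesis using s by simp
next
  case False
  then obtain s where s: "rho m = 2*s+1" by (auto elim: oddE)
  have s1: "s \<ge> 1" using assms s by simp
  have "(\<Sum>l\<in>{1..2*rho m}. wt m l) = (\<Sum>l\<in>{1..(3*s+1) + (s+1)}. wt m l)" using s by (simp add: algebra_simps)
  also have "\<dots> = (\<Sum>l\<in>{1..3*s+1}. wt m l) + (\<Sum>l\<in>{3*s+1+1..(3*s+1)+(s+1)}. wt m l)"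
    by (rule sum.ub_add_nat) simp
  also have "(\<Sum>l\<in>{3*s+1+1..(3*s+1)+(s+1)}. wt m l) = (\<Sum>l\<in>{3*s+2..4*s + 2}. wt m l)"
    by (simp add: algebra_simps)
  also have "\<dots> = (\<Sum>l\<in>{3*s+2..4*s}. wt m l) + (\<Sum>l\<in>{4*s+1..4*s+2}. wt m l)"
    using sum.ub_add_nat[of "3*s+2" "4*s" "wt m" 2] s1 by simp
  also have "(\<Sum>l\<in>{1..3*s+1}. wt m l) = real (3*s+1+1-1) * 2"
    by (rule sum_const_ivl) (use False s s1 in \<open>auto simp: wt_def\<close>)
  also have "(\<Sum>l\<in>{3*s+2..4*s}. wt m l) = real (4*s+1-(3*s+2)) * (-2)"
    by (rule sum_const_ivl) (use False s s1 in \<open>auto simp: wt_def\<close>)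
  also have "(\<Sum>l\<in>{4*s+1..4*s+2}. wt m l) = real (4*s+2+1-(4*s+1)) * (-1)"
    by (rule sum_const_ivl) (use False s s1 in \<open>auto simp: wt_def\<close>)
  finally show ?thesis using s1 by (simp add: s of_nat_diff)
qed


lemma abar_reindex:
  fixes F :: "real \<Rightarrow> real" and G :: "nat \<Rightarrow> real"
  assumes F0: "F 0 = 0"
  shows "(\<Sum>j\<in>{1..kk m}. F (abar m j) * G j)
       = (\<Sum>i<rho m. \<Sum>l\<in>{1..2*rho m}. F (wt m l) * G (l * pr m i))"
proof -
  let ?I = "{..<rho m} \<times> {1..2*rho m}"
  let ?S = "(\<lambda>(i,l). l * pr m i) ` ?I"
  have sub: "?S \<subseteq> {1..kk m}"
  proof
    fix j assume "j \<in> ?S"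
    then obtain i l where il: "i < rho m" "1 \<le> l" "l \<le> 2*rho m" "j = l * pr m i" by auto
    have "pr m i > 0" using pr_props(1)[OF il(1)] prime_gt_0_nat by blast
    then show "j \<in> {1..kk m}" using il mult_le_kk[OF il(1) il(3)] by (auto simp: Suc_le_eq)
  qed
  have "(\<Sum>j\<in>{1..kk m}. F (abar m j) * G j) = (\<Sum>j\<in>?S. F (abar m j) * G j)"
  proof (rule sum.mono_neutral_right[OF _ sub])
    show "\<forall>j\<in>{1..kk m} - ?S. F (abar m j) * G j = 0"
    proof
      fix j assume "j \<in> {1..kk m} - ?S"
      then have "\<not> (\<exists>i l. i < rho m \<and> 1 \<le> l \<and> l \<le> 2*rho m \<and> j = l * pr m i)" by auto
      then show "F (abar m j) * G j = 0" using abar_out F0 by simp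
    qed
  qed simp
  also have "\<dots> = (\<Sum>(i,l)\<in>?I. F (abar m (l * pr m i)) * G (l * pr m i))"
  proof (subst sum.reindex)
    show "inj_on (\<lambda>(i,l). l * pr m i) ?I"
      by (rule inj_onI) (use pr_uniq in auto)
  qed (simp add: case_prod_unfold)
  also have "\<dots> = (\<Sum>(i,l)\<in>?I. F (wt m l) * G (l * pr m i))"
    by (rule sum.cong) (auto simp: abar_at)
  also have "\<dots> = (\<Sum>i<rho m. \<Sum>l\<in>{1..2*rho m}. F (wt m l) * G (l * pr m i))"
    by (rule sum.cartesian_product[symmetric])
  finally show ?thesis .
qed

definition ph :: "nat \<Rightarrow> nat \<Rightarrow> nat \<Rightarrow> real" where
  "ph m i t = (if t mod pr m i = kk m mod pr m i then 1 else 0)"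

lemma modsub: "(x::nat) \<le> t \<Longrightarrow> ((t - x) mod p = t mod p) = (p dvd x)"
proof -
  assume a: "x \<le> t"
  then have "t - (t - x) = x" by simp
  then show ?thesis using mod_eq_dvd_iff_nat[of "t-x" t p] by (metis diff_le_self)
qed

lemma not_dvd:
  assumes "i < rho m" "i' < rho m" "i \<noteq> i'" "1 \<le> l" "l \<le> 2*rho m"
  shows "\<not> pr m i dvd l * pr m i'"
proof
  assume d: "pr m i dvd l * pr m i'"
  have pi: "prime (pr m i)" "prime (pr m i')" using assms pr_props by auto
  have ne: "pr m i \<noteq> pr m i'" using assms pr_inj by blast
  have "pr m i dvd l \<or> pr m i dvd pr m i'" using d pi(1) prime_dvd_mult_iff by blast
  moreover have "\<not> pr m i dvd pr m i'" using ne pi primes_dvd_imp_eq by blast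
  ultimately have "pr m i dvd l" by blast
  then have "pr m i \<le> l" using assms(4) by (auto dest: dvd_imp_le)
  then show False using pr_big[OF assms(1)] assms(5) by linarith
qed

lemma KA:
  assumes r2: "rho m \<ge> 2" and i: "i < rho m" and t: "kk m \<le> t" and p1: "ph m i t = 1"
  shows "(\<Sum>j\<in>{1..kk m}. abar m j * ph m i (t - j)) = 2 * real (rho m)"
proof -
  have "(\<Sum>j\<in>{1..kk m}. abar m j * ph m i (t - j))
      = (\<Sum>i'<rho m. \<Sum>l\<in>{1..2*rho m}. wt m l * ph m i (t - l * pr m i'))"
    using abar_reindex[of "\<lambda>x. x" m "\<lambda>j. ph m i (t - j)"] by simp
  also have "\<dots> = (\<Sum>i'<rho m. if i' = i then 2 * real (rho m) else 0)"
  proof (rule sum.cong[OF refl])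
    fix i' assume i': "i' \<in> {..<rho m}"
    show "(\<Sum>l\<in>{1..2*rho m}. wt m l * ph m i (t - l * pr m i')) = (if i' = i then 2 * real (rho m) else 0)"
    proof (cases "i' = i")
      case True
      have "(\<Sum>l\<in>{1..2*rho m}. wt m l * ph m i (t - l * pr m i')) = (\<Sum>l\<in>{1..2*rho m}. wt m l)"
      proof (rule sum.cong[OF refl])
        fix l assume l: "l \<in> {1..2*rho m}"
        have le: "l * pr m i \<le> t" using mult_le_kk[OF i, of l] l t by auto
        have "(t - l * pr m i) mod pr m i = t mod pr m i" using modsub[OF le] by simp
        then show "wt m l * ph m i (t - l * pr m i') = wt m l" using p1 True
          by (simp add: ph_def split: if_splits)
      qed
      then show ?thesis using wt_sum[OF r2] True by simp
    next
      case False
      have "(\<Sum>l\<in>{1..2*rho m}. wt m l * ph m i (t - l * pr m i')) = 0"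
      proof (rule sum.neutral, rule ballI)
        fix l assume l: "l \<in> {1..2*rho m}"
        have le: "l * pr m i' \<le> t" using mult_le_kk[of i' m l] i' l t by auto
        have "\<not> pr m i dvd l * pr m i'" using not_dvd[of i m i' l] i i' False l by auto
        then have "(t - l * pr m i') mod pr m i \<noteq> t mod pr m i" using modsub[OF le] by simp
        then show "wt m l * ph m i (t - l * pr m i') = 0" using p1
          by (simp add: ph_def split: if_splits)
      qed
      then show ?thesis using False by simp
    qed
  qed
  also have "\<dots> = 2 * real (rho m)" using i by (simp add: sum.delta)
  finally show ?thesis .
qed

lemma KB:
  assumes r2: "rho m \<ge> 2" and i: "i < rho m" and t: "kk m \<le> t" and p0: "ph m i t = 0"
    and psi: "\<And>j. j \<in> {1..kk m} \<Longrightarrow> 0 \<le> psi j \<and> psi j \<le> ph m i (t - j)"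
  shows "(\<Sum>j\<in>{1..kk m}. abar m j * psi j) \<le> 2 * real (rho m) - 2"
proof -
  have "(\<Sum>j\<in>{1..kk m}. abar m j * psi j) \<le> (\<Sum>j\<in>{1..kk m}. max (abar m j) 0 * ph m i (t - j))"
  proof (rule sum_mono)
    fix j assume j: "j \<in> {1..kk m}"
    show "abar m j * psi j \<le> max (abar m j) 0 * ph m i (t - j)"
    proof (cases "abar m j \<ge> 0")
      case True
      then show ?thesis using psi[OF j] by (simp add: mult_left_mono)
    next
      case False
      then have "abar m j * psi j \<le> 0" using psi[OF j] by (simp add: mult_nonpos_nonneg)
      then show ?thesis using False by simp
    qed
  qed
  also have "\<dots> = (\<Sum>i'<rho m. \<Sum>l\<in>{1..2*rho m}. max (wt m l) 0 * ph m i (t - l * pr m i'))"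
    using abar_reindex[of "\<lambda>x. max x 0" m "\<lambda>j. ph m i (t - j)"] by simp
  also have "\<dots> \<le> (\<Sum>i'<rho m. 2 - (if i' = i then 2 else 0))"
  proof (rule sum_mono)
    fix i' assume i': "i' \<in> {..<rho m}"
    show "(\<Sum>l\<in>{1..2*rho m}. max (wt m l) 0 * ph m i (t - l * pr m i')) \<le> 2 - (if i' = i then 2 else 0)"
    proof (cases "i' = i")
      case True
      have "(\<Sum>l\<in>{1..2*rho m}. max (wt m l) 0 * ph m i (t - l * pr m i')) = 0"
      proof (rule sum.neutral, rule ballI)
        fix l assume l: "l \<in> {1..2*rho m}"
        have le: "l * pr m i \<le> t" using mult_le_kk[OF i, of l] l t by auto
        have "(t - l * pr m i) mod pr m i = t mod pr m i" using modsub[OF le] by simp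
        then show "max (wt m l) 0 * ph m i (t - l * pr m i') = 0" using p0 True
          by (simp add: ph_def split: if_splits)
      qed
      then show ?thesis using True by simp
    next
      case False
      let ?E = "{l \<in> {1..2*rho m}. ph m i (t - l * pr m i') = 1}"
      have fin: "finite ?E" by simp
      have cardE: "card ?E \<le> Suc 0"
      proof (subst card_le_Suc0_iff_eq[OF fin], intro ballI)
        have key: "a = b" if a: "a \<in> ?E" and b: "b \<in> ?E" and ab: "a < b" for a b
        proof -
          have lea: "a * pr m i' \<le> t" using mult_le_kk[of i' m a] i' a t by auto
          have leb: "b * pr m i' \<le> t" using mult_le_kk[of i' m b] i' b t by auto
          have "(t - a * pr m i') mod pr m i = (t - b * pr m i') mod pr m i"
            using a b by (simp add: ph_def split: if_splits)
          moreover have "t - a * pr m i' = (t - b * pr m i') + (b - a) * pr m i'"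
            using lea leb ab by (simp add: diff_mult_distrib)
          ultimately have "((t - b * pr m i') + (b - a) * pr m i') mod pr m i = (t - b * pr m i') mod pr m i"
            by simp
          then have "pr m i dvd (b - a) * pr m i'"
            using modsub[of "(b - a) * pr m i'" "(t - b * pr m i') + (b - a) * pr m i'" "pr m i"] by simp
          moreover have "1 \<le> b - a" "b - a \<le> 2 * rho m" using ab b by auto
          moreover have "i \<noteq> i'" using False by simp
          ultimately show ?thesis using not_dvd[of i m i' "b - a"] i i' by blast
        qed
        fix a b assume "a \<in> ?E" "b \<in> ?E"
        then show "a = b" using key[of a b] key[of b a] by (cases a b rule: linorder_cases) auto
      qed
      have "(\<Sum>l\<in>{1..2*rho m}. max (wt m l) 0 * ph m i (t - l * pr m i'))
          = (\<Sum>l\<in>{1..2*rho m}. if ph m i (t - l * pr m i') = 1 then max (wt m l) 0 else 0)"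
        by (rule sum.cong[OF refl]) (simp add: ph_def)
      also have "\<dots> = (\<Sum>l\<in>?E. max (wt m l) 0)" by (rule sum.inter_filter[symmetric]) simp
      also have "\<dots> \<le> (\<Sum>l\<in>?E. 2)" by (rule sum_mono) (simp add: wt_le2)
      also have "\<dots> = 2 * real (card ?E)" by simp
      also have "\<dots> \<le> 2" using cardE by simp
      finally show ?thesis using False by simp
    qed
  qed
  also have "\<dots> = 2 * real (rho m) - 2"
    using i by (simp add: sum_subtractf sum.delta)
  finally show ?thesis .
qed


lemma pr_pos: "i < rho m \<Longrightarrow> 0 < pr m i"
  using pr_props(1) prime_gt_0_nat by blast

lemma kk_pos: "m > 0 \<Longrightarrow> rho m \<ge> 2 \<Longrightarrow> kk m > 0"
  unfolding kk_def by simp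

lemma step_vals: "step x = 0 \<or> step x = 1"
  unfolding step_def by auto

lemma ph_vals: "ph m i t = 0 \<or> ph m i t = 1"
  unfolding ph_def by auto

lemma ph_nonneg: "0 \<le> ph m i t"
  unfolding ph_def by simp

lemma init_char:
  assumes i: "i < rho m" and t: "t < kk m"
  shows "(\<exists>l. l < mu m i \<and> t = beta0 m i + l * pr m i) \<longleftrightarrow> t mod pr m i = kk m mod pr m i"
proof -
  let ?P = "pr m i"
  have P0: "?P > 0" using pr_pos[OF i] .
  have b: "beta0 m i = kk m mod ?P" unfolding beta0_def mu_def by (simp add: minus_mult_div_eq_mod)
  show ?thesis
  proof
    assume "\<exists>l. l < mu m i \<and> t = beta0 m i + l * pr m i"
    then obtain l where "t = kk m mod ?P + l * ?P" using b by auto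
    then show "t mod ?P = kk m mod ?P" by simp
  next
    assume h: "t mod ?P = kk m mod ?P"
    have e1: "t = ?P * (t div ?P) + kk m mod ?P" using h by (metis div_mult_mod_eq mult.commute)
    have e2: "kk m = ?P * (kk m div ?P) + kk m mod ?P" by (metis div_mult_mod_eq mult.commute)
    have "t div ?P < kk m div ?P"
    proof (rule ccontr)
      assume "\<not> t div ?P < kk m div ?P"
      then have "?P * (kk m div ?P) \<le> ?P * (t div ?P)" by simp
      then show False using e1 e2 t by linarith
    qed
    then show "\<exists>l. l < mu m i \<and> t = beta0 m i + l * pr m i"
      using e1 b unfolding mu_def by (intro exI[of _ "t div ?P"]) (simp add: mult.commute)
  qed
qed

lemma xs_char:
  assumes m: "m > 0" and r2: "rho m \<ge> 2" and i: "i < rho m"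
  shows "xs m i t = ph m i t"
proof (induction t rule: less_induct)
  case (less t)
  show ?case
  proof (cases "t < kk m")
    case True
    have "xs m i t = (if \<exists>l. l < mu m i \<and> t = beta0 m i + l * pr m i then 1 else 0)"
      using True by (subst xs.simps) simp
    then show ?thesis using init_char[OF i True] by (simp add: ph_def)
  next
    case False
    have kp: "kk m > 0" using kk_pos[OF m r2] .
    have sum_eq: "(\<Sum>j\<in>{1..kk m}. abar m j * xs m i (t - j)) = (\<Sum>j\<in>{1..kk m}. abar m j * ph m i (t - j))"
    proof (rule sum.cong[OF refl])
      fix j assume "j \<in> {1..kk m}"
      then have "t - j < t" using False by auto
      then show "abar m j * xs m i (t - j) = abar m j * ph m i (t - j)" using less by simp
    qed
    have xs_eq: "xs m i t = step ((\<Sum>j\<in>{1..kk m}. abar m j * ph m i (t - j)) - thetabar m)"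
      using False sum_eq by (subst xs.simps) simp
    show ?thesis
    proof (cases "ph m i t = 1")
      case True
      then show ?thesis using KA[OF r2 i _ True] False xs_eq by (simp add: thetabar_def step_def)
    next
      case F: False
      then have p0: "ph m i t = 0" using ph_vals by blast
      have "(\<Sum>j\<in>{1..kk m}. abar m j * ph m i (t - j)) \<le> 2 * real (rho m) - 2"
        by (rule KB[OF r2 i _ p0]) (use False ph_vals in \<open>auto simp: ph_def\<close>)
      then show ?thesis using xs_eq p0 by (simp add: thetabar_def step_def)
    qed
  qed
qed

lemma bb_reindex:
  fixes G :: "nat \<Rightarrow> real"
  assumes r: "rho m > 0"
  shows "(\<Sum>f\<in>{1..hh m}. bb m f * G f) = (\<Sum>j\<in>{1..kk m}. abar m j * G (rho m * j))"
proof -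
  let ?S = "(\<lambda>j. rho m * j) ` {1..kk m}"
  have sub: "?S \<subseteq> {1..hh m}"
  proof
    fix f assume "f \<in> ?S"
    then obtain j where j: "1 \<le> j" "j \<le> kk m" "f = rho m * j" by auto
    have "rho m * j \<le> rho m * kk m" using j(2) by (rule mult_left_mono) simp
    moreover have "1 \<le> rho m * j" using j(1) r by simp
    ultimately show "f \<in> {1..hh m}" using j(3) by (simp add: hh_def)
  qed
  have "(\<Sum>f\<in>{1..hh m}. bb m f * G f) = (\<Sum>f\<in>?S. bb m f * G f)"
  proof (rule sum.mono_neutral_right[OF _ sub])
    show "\<forall>f\<in>{1..hh m} - ?S. bb m f * G f = 0"
    proof
      fix f assume f: "f \<in> {1..hh m} - ?S"
      show "bb m f * G f = 0"
      proof (cases "rho m dvd f \<and> 1 \<le> f div rho m \<and> f div rho m \<le> kk m")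
        case True
        then have "f = rho m * (f div rho m)" by simp
        then have "f \<in> ?S" using True by (intro image_eqI[of _ _ "f div rho m"]) auto
        then show ?thesis using f by simp
      next
        case False
        then have "bb m f = 0" unfolding bb_def by meson
        then show ?thesis by simp
      qed
    qed
  qed simp
  also have "\<dots> = (\<Sum>j\<in>{1..kk m}. bb m (rho m * j) * G (rho m * j))"
    by (rule sum.reindex_cong[of "\<lambda>j. rho m * j"]) (use r in \<open>simp_all add: inj_on_def\<close>)
  also have "\<dots> = (\<Sum>j\<in>{1..kk m}. abar m j * G (rho m * j))"
    by (rule sum.cong[OF refl]) (use r in \<open>simp add: bb_def\<close>)
  finally show ?thesis .
qed

lemma sub_mult_mod_div:
  assumes "r * j \<le> (n::nat)" "r > 0"
  shows "(n - r * j) mod r = n mod r" "(n - r * j) div r = n div r - j"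
proof -
  define a where "a = n - r * j"
  have a: "n = a + r * j" using assms(1) unfolding a_def by simp
  have "n mod r = a mod r" unfolding a by simp
  then show "(n - r * j) mod r = n mod r" unfolding a_def by simp
  have "n div r = a div r + j" unfolding a using assms(2) by simp
  then show "(n - r * j) div r = n div r - j" unfolding a_def by simp
qed

lemma ys_char:
  assumes m: "m > 0" and r2: "rho m \<ge> 2"
  shows "ys m n = ph m (n mod rho m) (1 + n div rho m)"
proof (induction n rule: less_induct)
  case (less n)
  have r: "rho m > 0" using r2 by simp
  let ?i = "n mod rho m"
  have i: "?i < rho m" using r by simp
  show ?case
  proof (cases "n < hh m")
    case True
    have "ys m n = xs m ?i (1 + n div rho m)" using True by (subst ys.simps) simp
    then show ?thesis using xs_char[OF m r2 i] by simp
  next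
    case False
    let ?T = "1 + n div rho m"
    have kp: "kk m > 0" using kk_pos[OF m r2] .
    have kd: "kk m \<le> n div rho m"
    proof -
      have "rho m * kk m \<le> n" using False by (simp add: hh_def)
      then show "kk m \<le> n div rho m" using r by (metis div_le_mono nonzero_mult_div_cancel_left neq0_conv)
    qed
    then have T: "kk m \<le> ?T" by simp
    have sum_eq: "(\<Sum>f\<in>{1..hh m}. bb m f * ys m (n - f)) = (\<Sum>j\<in>{1..kk m}. abar m j * ph m ?i (?T - j))"
    proof -
      have "(\<Sum>f\<in>{1..hh m}. bb m f * ys m (n - f)) = (\<Sum>j\<in>{1..kk m}. abar m j * ys m (n - rho m * j))"
        by (rule bb_reindex[OF r])
      also have "\<dots> = (\<Sum>j\<in>{1..kk m}. abar m j * ph m ?i (?T - j))"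
      proof (rule sum.cong[OF refl])
        fix j assume j: "j \<in> {1..kk m}"
        have le: "rho m * j \<le> n" using j False by (auto simp: hh_def intro: order_trans[OF mult_le_mono2])
        have pj: "0 < rho m * j" using j r by simp
        have lt: "n - rho m * j < n" using pj le by linarith
        show "abar m j * ys m (n - rho m * j) = abar m j * ph m ?i (?T - j)"
          proof -
          have "Suc (n div rho m - j) = Suc (n div rho m) - j" using j kd by (simp add: Suc_diff_le)
          then show ?thesis using less[OF lt] sub_mult_mod_div[OF le r] by simp
        qed
      qed
      finally show ?thesis .
    qed
    have ys_eq: "ys m n = step ((\<Sum>j\<in>{1..kk m}. abar m j * ph m ?i (?T - j)) - thetabar m)"
      using False sum_eq by (subst ys.simps) simp
    show ?thesis
    proof (cases "ph m ?i ?T = 1")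
      case True
      then show ?thesis using KA[OF r2 i T True] ys_eq by (simp add: thetabar_def step_def)
    next
      case F: False
      then have p0: "ph m ?i ?T = 0" using ph_vals by blast
      have "(\<Sum>j\<in>{1..kk m}. abar m j * ph m ?i (?T - j)) \<le> 2 * real (rho m) - 2"
        by (rule KB[OF r2 i T p0]) (simp add: ph_nonneg)
      then show ?thesis using ys_eq p0 by (simp add: thetabar_def step_def)
    qed
  qed
qed


lemma ys_vals: "m > 0 \<Longrightarrow> rho m \<ge> 2 \<Longrightarrow> ys m n = 0 \<or> ys m n = 1"
  using ys_char ph_vals by metis

lemma ys_one:
  assumes "m > 0" "rho m \<ge> 2"
  shows "ys m n = 1 \<longleftrightarrow> (1 + n div rho m) mod pr m (n mod rho m) = kk m mod pr m (n mod rho m)"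
  using ys_char[OF assms] by (simp add: ph_def)

lemma nat_mod_eq_int: "((a::nat) mod r = b mod r) \<longleftrightarrow> (int r dvd int a - int b)"
proof -
  have "(a mod r = b mod r) \<longleftrightarrow> int (a mod r) = int (b mod r)" by simp
  also have "\<dots> \<longleftrightarrow> int a mod int r = int b mod int r" by (simp add: of_nat_mod)
  also have "\<dots> \<longleftrightarrow> int r dvd int a - int b" by (rule mod_eq_dvd_iff)
  finally show ?thesis .
qed

lemma Ydiff:
  assumes m: "m > 0" and r2: "rho m \<ge> 2" and u: "ys m u = 1" and u': "ys m u' = 1"
    and c: "u mod rho m = u' mod rho m"
  shows "int (rho m) * int (pr m (u mod rho m)) dvd int u - int u'"
proof -
  let ?r = "rho m" let ?i = "u mod rho m" let ?P = "pr m ?i"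
  have "(1 + u div ?r) mod ?P = kk m mod ?P" using u ys_one[OF m r2] by simp
  moreover have "(1 + u' div ?r) mod ?P = kk m mod ?P" using u' ys_one[OF m r2] c by simp
  ultimately have "(1 + u div ?r) mod ?P = (1 + u' div ?r) mod ?P" by simp
  then have d1: "int ?P dvd int (u div ?r) - int (u' div ?r)"
    unfolding nat_mod_eq_int by simp
  have e1: "int u = int ?r * int (u div ?r) + int ?i" by (metis div_mult_mod_eq mult.commute of_nat_add of_nat_mult)
  have e2: "int u' = int ?r * int (u' div ?r) + int ?i" using c by (metis div_mult_mod_eq mult.commute of_nat_add of_nat_mult)
  have "int u - int u' = int ?r * (int (u div ?r) - int (u' div ?r))" using e1 e2 by (simp add: algebra_simps)
  then show ?thesis using d1 by (simp add: mult_dvd_mono)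
qed

lemma Tot_bound:
  assumes m: "m > 0" and r2: "rho m \<ge> 2" and dr: "d \<le> rho m - 1"
  shows "rho m * rho m \<le> Tot m d"
proof -
  let ?r = "rho m" let ?K = "kk m" let ?La = "Lcm (pr m ` {..d})"
  have r: "?r > 0" using r2 by simp
  have L1e: "L1 m d = ?r * ?La" by (simp add: L1_def)
  define T0 where "T0 = hh m + L1 m d - ?r"
  have kp: "?K > 0" using kk_pos[OF m r2] .
  have T0e: "T0 = ?r * (?K + ?La - 1)" unfolding T0_def hh_def L1e using kp
    by (simp add: algebra_simps diff_mult_distrib2)
  define a where "a i = (?K + pr m i * (?La + 1) - (?La + 1)) mod pr m i" for i
  define J where "J i q = ?La + a i + q * pr m i" for i q
  define x where "x i q = ?r * J i q + i" for i q
  define f where "f i q = T0 - x i q" for i q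
  have props: "f i q \<in> B0 m d \<and> x i q < T0" if i: "i < ?r" and q: "q < ?r" for i q
  proof -
    let ?P = "pr m i"
    have P0: "?P > 0" using pr_pos[OF i] .
    have "1 * (?La + 1) \<le> ?P * (?La + 1)" using P0 by (intro mult_right_mono) auto
    then have le1: "?La + 1 \<le> ?P * (?La + 1)" by simp
    have "1 + J i q = ((?La + 1) + a i) + q * ?P" unfolding J_def by simp
    then have "(1 + J i q) mod ?P = ((?La + 1) + a i) mod ?P" by (metis mod_mult_self1)
    also have "\<dots> = ((?La + 1) + (?K + ?P * (?La + 1) - (?La + 1))) mod ?P"
      unfolding a_def by (rule mod_add_right_eq)
    also have "(?La + 1) + (?K + ?P * (?La + 1) - (?La + 1)) = ?K + ?P * (?La + 1)" using le1 by linarith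
    also have "(?K + ?P * (?La + 1)) mod ?P = ?K mod ?P" by (rule mod_mult_self2)
    finally have jm: "(1 + J i q) mod ?P = ?K mod ?P" .
    have "a i < ?P" unfolding a_def using P0 by simp
    then have "J i q \<le> ?La + (?P - 1) + (?r - 1) * ?P" unfolding J_def using q
      by (intro add_mono) (auto intro: mult_right_mono)
    also have "\<dots> = ?La + ?r * ?P - 1"
    proof -
      have "?P \<le> ?r * ?P" using r by simp
      moreover have "(?r - 1) * ?P = ?r * ?P - ?P" by (simp add: diff_mult_distrib)
      ultimately show ?thesis using P0 by linarith
    qed
    finally have Jle: "J i q \<le> ?La + ?r * ?P - 1" .
    have "?r * ?P + 1 \<le> ?K"
    proof -
      have "?P \<le> 3*m" using pr_props(3)[OF i] by simp
      then have "?r * ?P \<le> ?r * (3*m)" by simp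
      moreover have "?r * (3*m) + 1 \<le> ?K"
      proof -
        have "?r \<le> m * ?r" using m by simp
        moreover have "?K = 6 * (m * ?r) - ?r" unfolding kk_def by (simp add: diff_mult_distrib)
        moreover have "?r * (3*m) = 3 * (m * ?r)" by simp
        ultimately show ?thesis using r by linarith
      qed
      ultimately show ?thesis by linarith
    qed
    moreover have "0 < ?r * ?P" using P0 r by simp
    ultimately have Jle2: "J i q + 2 \<le> ?K + ?La" using Jle by linarith
    have xlt: "x i q < T0"
    proof -
      have "x i q < ?r * J i q + ?r" unfolding x_def using i by simp
      also have "\<dots> = ?r * (J i q + 1)" by (simp add: algebra_simps)
      also have "\<dots> \<le> ?r * (?K + ?La - 1)" using Jle2 by (intro mult_left_mono) auto
      finally show ?thesis using T0e by simp
    qed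
    have xge: "?r * ?La \<le> x i q" unfolding x_def J_def by (simp add: algebra_simps)
    have f1: "1 \<le> f i q" unfolding f_def using xlt by simp
    have "f i q \<le> T0 - ?r * ?La" unfolding f_def using xge by simp
    also have "\<dots> = ?r * (?K - 1)" unfolding T0e using kp by (simp add: algebra_simps diff_mult_distrib2)
    also have "\<dots> \<le> hh m - d" unfolding hh_def using dr r kp by (simp add: diff_mult_distrib2)
    finally have f2: "f i q \<le> hh m - d" .
    have xm: "x i q mod ?r = i" "x i q div ?r = J i q" unfolding x_def using i by auto
    have "ys m (x i q) = 1" using ys_one[OF m r2, of "x i q"] xm jm by simp
    moreover have "hh m + L1 m d - ?r - f i q = x i q" unfolding f_def using xlt T0_def by simp
    ultimately have "f i q \<in> B0 m d" unfolding B0_def using f1 f2 by simp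
    then show ?thesis using xlt r by simp
  qed
  have inj: "inj_on (\<lambda>(i,q). f i q) ({..<?r} \<times> {..<?r})"
  proof (rule inj_onI, clarify)
    fix i q i' q' assume i: "i < ?r" "q < ?r" "i' < ?r" "q' < ?r" and e: "f i q = f i' q'"
    have "x i q = x i' q'" using e props[OF i(1,2)] props[OF i(3,4)] unfolding f_def by simp
    then have "x i q mod ?r = x i' q' mod ?r" "x i q div ?r = x i' q' div ?r" by auto
    then have ii: "i = i'" and "J i q = J i' q'" unfolding x_def using i by auto
    then have "q * pr m i = q' * pr m i" unfolding J_def by simp
    then show "i = i' \<and> q = q'" using ii pr_pos[OF i(1)] by simp
  qed
  have fin: "finite (B0 m d)" unfolding B0_def by (rule finite_subset[of _ "{..hh m}"]) auto
  have "(\<lambda>(i,q). f i q) ` ({..<?r} \<times> {..<?r}) \<subseteq> B0 m d" using props by auto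
  then have "card ((\<lambda>(i,q). f i q) ` ({..<?r} \<times> {..<?r})) \<le> Tot m d"
    unfolding Tot_def using fin by (rule card_mono[rotated])
  moreover have "card ((\<lambda>(i,q). f i q) ` ({..<?r} \<times> {..<?r})) = ?r * ?r"
    using card_image[OF inj] by (simp add: card_cartesian_product)
  ultimately show ?thesis by simp
qed


lemma La_pos:
  assumes r2: "rho m \<ge> 2" and dr: "d \<le> rho m - 1"
  shows "Lcm (pr m ` {..d}) > 0"
proof -
  have "0 \<notin> pr m ` {..d}"
  proof
    assume "0 \<in> pr m ` {..d}"
    then obtain i where "i \<le> d" "pr m i = 0" by auto
    moreover have "i < rho m" using \<open>i \<le> d\<close> dr r2 by linarith
    ultimately show False using pr_pos by fastforce
  qed
  moreover have "finite (pr m ` {..d})" by simp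
  ultimately show ?thesis using Lcm_0_iff[of "pr m ` {..d}"] by (metis gr0I)
qed

lemma AA_mem:
  assumes "g \<in> AA m d"
  shows "\<exists>l. l \<le> d \<and> l \<le> g \<and> g - l \<in> B0 m d"
  using assms unfolding AA_def Bl_def by auto

lemma N_bound:
  assumes m: "m > 0" and r2: "rho m \<ge> 2" and dr: "d \<le> rho m - 1" and n: "hh m \<le> n"
    and i0: "d < n mod rho m"
  shows "card {g \<in> AA m d. ys m (n - g) = 1} \<le> rho m * (d + 1)"
proof -
  let ?r = "rho m" let ?K = "kk m" let ?La = "Lcm (pr m ` {..d})"
  let ?E = "{g \<in> AA m d. ys m (n - g) = 1}"
  have r: "?r > 0" using r2 by simp
  have kp: "?K > 0" using kk_pos[OF m r2] .
  have La: "?La > 0" using La_pos[OF r2 dr] .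
  define T0 where "T0 = hh m + L1 m d - ?r"
  have T0e: "T0 = ?r * (?K + ?La - 1)" unfolding T0_def hh_def L1_def using kp
    by (simp add: algebra_simps diff_mult_distrib2)
  have hT0: "hh m \<le> T0" unfolding T0e hh_def using La by (intro mult_left_mono) auto
  have rT0: "int ?r dvd int T0" unfolding T0e by simp
  have "?r \<le> ?r * ?K" using kp by simp
  then have dh: "d < hh m" unfolding hh_def using dr r by linarith
  define Q where "Q g l \<longleftrightarrow> l \<le> d \<and> l \<le> g \<and> g - l \<in> B0 m d" for g l
  define lf where "lf g = (LEAST l. Q g l)" for g
  have lfQ: "Q g (lf g)" if "g \<in> AA m d" for g
  proof -
    have "\<exists>l. Q g l" using AA_mem[OF that] unfolding Q_def .
    then show ?thesis unfolding lf_def by (rule LeastI_ex)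
  qed
  define phi where "phi g = (g mod ?r, lf g)" for g
  have img: "phi ` ?E \<subseteq> {..<?r} \<times> {..d}"
  proof
    fix x assume "x \<in> phi ` ?E"
    then obtain g where g: "g \<in> AA m d" "x = phi g" by auto
    have "lf g \<le> d" using lfQ[OF g(1)] unfolding Q_def by simp
    then show "x \<in> {..<?r} \<times> {..d}" using g(2) r unfolding phi_def by simp
  qed
  have B0p: "1 \<le> f \<and> f \<le> hh m - d \<and> ys m (T0 - f) = 1" if "f \<in> B0 m d" for f
    using that unfolding B0_def T0_def by auto
  have inj: "inj_on phi ?E"
  proof (rule inj_onI)
    fix g g' assume g: "g \<in> ?E" and g': "g' \<in> ?E" and e: "phi g = phi g'"
    define l where "l = lf g"
    have gm: "g mod ?r = g' mod ?r" and ll: "lf g' = l" using e unfolding phi_def l_def by auto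
    have Qg: "Q g l" using lfQ g unfolding l_def by simp
    have Qg': "Q g' l" using lfQ g' ll by force
    define f where "f = g - l" define f' where "f' = g' - l"
    have fB: "f \<in> B0 m d" "f' \<in> B0 m d" using Qg Qg' unfolding Q_def f_def f'_def by auto
    have ld: "l \<le> d" using Qg unfolding Q_def by simp
    have gf: "g = f + l" "g' = f' + l" using Qg Qg' unfolding Q_def f_def f'_def by auto
    have fr: "1 \<le> f" "f \<le> hh m - d" "ys m (T0 - f) = 1" using B0p[OF fB(1)] by auto
    have fr': "1 \<le> f'" "f' \<le> hh m - d" "ys m (T0 - f') = 1" using B0p[OF fB(2)] by auto
    have gh: "1 \<le> g" "g \<le> hh m" "1 \<le> g'" "g' \<le> hh m" using gf fr fr' ld dh by auto
    define u where "u = n - g" define u' where "u' = n - g'"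
    define v where "v = T0 - f" define v' where "v' = T0 - f'"
    have yu: "ys m u = 1" "ys m u' = 1" using g g' unfolding u_def u'_def by auto
    have yv: "ys m v = 1" "ys m v' = 1" using fr fr' unfolding v_def v'_def by auto
    have iu: "int u = int n - int g" "int u' = int n - int g'" unfolding u_def u'_def using gh n by auto
    have iv: "int v = int T0 - int f" "int v' = int T0 - int f'" unfolding v_def v'_def using fr fr' hT0 by auto
    define D where "D = int g' - int g"
    have rD: "int ?r dvd D" using gm unfolding nat_mod_eq_int D_def by (simp add: dvd_diff_commute)
    have uu: "u mod ?r = u' mod ?r" unfolding nat_mod_eq_int iu using rD D_def by (simp add: algebra_simps)
    have vv: "v mod ?r = v' mod ?r" unfolding nat_mod_eq_int iv using rD D_def gf by (simp add: algebra_simps)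
    have st: "u mod ?r \<noteq> v mod ?r"
    proof
      assume "u mod ?r = v mod ?r"
      then have "int ?r dvd int u - int v" unfolding nat_mod_eq_int .
      moreover have "int u - int v = (int n - int (n mod ?r)) + (int (n mod ?r) - int l) - int T0"
        using iu iv gf by simp
      moreover have "int ?r dvd int n - int (n mod ?r)"
        using nat_mod_eq_int[of n ?r "n mod ?r"] by simp
      ultimately have "int ?r dvd int (n mod ?r) - int l" using rT0
        by (metis dvd_add_right_iff dvd_diff diff_add_cancel)
      moreover have "0 < int (n mod ?r) - int l" using i0 ld by simp
      ultimately have "int ?r \<le> int (n mod ?r) - int l" by (rule zdvd_imp_le)
      moreover have "n mod ?r < ?r" using r by simp
      ultimately show False by simp
    qed
    let ?s = "u mod ?r" let ?t = "v mod ?r"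
    have s: "?s < ?r" "?t < ?r" using r by auto
    have "int u - int u' = D" using iu D_def by simp
    then have d1: "int ?r * int (pr m ?s) dvd D"
      using Ydiff[OF m r2 yu uu] by simp
    have "int v - int v' = D" using iv D_def gf by simp
    then have d2: "int ?r * int (pr m ?t) dvd D"
      using Ydiff[OF m r2 yv vv] by simp
    obtain E where DE: "D = int ?r * E" using rD by (auto elim: dvdE)
    have rnz: "int ?r \<noteq> 0" using r by simp
    have e1: "int (pr m ?s) dvd E" using d1 DE rnz by simp
    have e2: "int (pr m ?t) dvd E" using d2 DE rnz by simp
    have ne: "pr m ?s \<noteq> pr m ?t" using st pr_inj s by blast
    have cop: "coprime (int (pr m ?s)) (int (pr m ?t))"
      using primes_coprime[OF pr_props(1)[OF s(1)] pr_props(1)[OF s(2)] ne] by simp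
    have e3: "int (pr m ?s) * int (pr m ?t) dvd E" using divides_mult[OF e1 e2 cop] .
    have "\<bar>D\<bar> < int (hh m)" using gh unfolding D_def by linarith
    then have "int ?r * \<bar>E\<bar> < int ?r * int ?K" unfolding DE hh_def by (simp add: abs_mult)
    then have Eb: "\<bar>E\<bar> < int ?K" using r by simp
    have "E = 0"
    proof (rule ccontr)
      assume "E \<noteq> 0"
      then have "\<bar>int (pr m ?s) * int (pr m ?t)\<bar> \<le> \<bar>E\<bar>" using e3 by (rule dvd_imp_le_int)
      moreover have "?K < pr m ?s * pr m ?t" using kk_lt s by blast
      then have "int ?K < int (pr m ?s) * int (pr m ?t)" by (metis of_nat_less_iff of_nat_mult)
      ultimately show False using Eb by (simp add: abs_mult)
    qed
    then have "D = 0" using DE by simp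
    then show "g = g'" unfolding D_def by simp
  qed
  have "card ?E \<le> card ({..<?r} \<times> {..d})" using card_inj_on_le[OF inj img] by simp
  then show ?thesis by (simp add: card_cartesian_product)
qed


lemma ys_shift:
  assumes m: "m > 0" and r2: "rho m \<ge> 2" and n: "hh m \<le> n" and j: "j \<in> {1..kk m}"
  shows "ys m (n - rho m * j) = ph m (n mod rho m) (1 + n div rho m - j)"
    "(n - rho m * j) mod rho m = n mod rho m" "n - rho m * j < n"
proof -
  have r: "rho m > 0" using r2 by simp
  have kd: "kk m \<le> n div rho m"
  proof -
    have "rho m * kk m \<le> n" using n by (simp add: hh_def)
    then show "kk m \<le> n div rho m" using r by (metis div_le_mono nonzero_mult_div_cancel_left neq0_conv)
  qed
  have le: "rho m * j \<le> n" using j n by (auto simp: hh_def intro: order_trans[OF mult_le_mono2])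
  have pj: "0 < rho m * j" using j r by simp
  show "n - rho m * j < n" using pj le by linarith
  show "(n - rho m * j) mod rho m = n mod rho m" using sub_mult_mod_div[OF le r] by simp
  have "Suc (n div rho m - j) = Suc (n div rho m) - j" using j kd by (simp add: Suc_diff_le)
  then show "ys m (n - rho m * j) = ph m (n mod rho m) (1 + n div rho m - j)"
    using ys_char[OF m r2, of "n - rho m * j"] sub_mult_mod_div[OF le r] by simp
qed

lemma Z:
  assumes m: "m > 0" and r2: "rho m \<ge> 2" and lam1: "-1 \<le> lam" and lam0: "lam < 0"
    and dr: "d \<le> rho m - 1"
  shows "(zs m lam n d = 0 \<or> zs m lam n d = 1) \<and> zs m lam n d \<le> ys m n
         \<and> (d < n mod rho m \<longrightarrow> zs m lam n d = ys m n)"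
proof (induction n rule: less_induct)
  case (less n)
  let ?r = "rho m" let ?K = "kk m"
  have r: "?r > 0" using r2 by simp
  have kp: "?K > 0" using kk_pos[OF m r2] .
  show ?case
  proof (cases "n < hh m")
    case True
    then have "zs m lam n d = ys m n" by (subst zs.simps) simp
    then show ?thesis using ys_vals[OF m r2, of n] by simp
  next
    case False
    then have n: "hh m \<le> n" by simp
    have "?r \<le> ?r * ?K" using kp by simp
    then have dh: "d < hh m" unfolding hh_def using dr r by linarith
    have Asub: "AA m d \<subseteq> {1..hh m}"
    proof
      fix g assume "g \<in> AA m d"
      then obtain l where l: "l \<le> d" "l \<le> g" "g - l \<in> B0 m d" using AA_mem by blast
      then have "1 \<le> g - l" "g - l \<le> hh m - d" unfolding B0_def by auto
      then show "g \<in> {1..hh m}" using l dh by auto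
    qed
    have finA: "finite (AA m d)" using Asub finite_subset by blast
    let ?z = "\<lambda>k. zs m lam k d"
    define Sz where "Sz = (\<Sum>f\<in>{1..hh m}. bb m f * ?z (n - f))"
    define Nz where "Nz = (\<Sum>f\<in>AA m d. ?z (n - f))"
    define be where "be = betad m lam d"
    have split: "(\<Sum>f\<in>{1..hh m}. cc m lam f d * ?z (n - f)) = Sz + be * Nz"
    proof -
      have "(\<Sum>f\<in>{1..hh m}. cc m lam f d * ?z (n - f))
          = (\<Sum>f\<in>{1..hh m}. bb m f * ?z (n - f) + (if f \<in> AA m d then be * ?z (n - f) else 0))"
        by (rule sum.cong[OF refl]) (simp add: cc_def be_def algebra_simps)
      also have "\<dots> = Sz + (\<Sum>f\<in>{1..hh m}. if f \<in> AA m d then be * ?z (n - f) else 0)"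
        unfolding Sz_def by (simp add: sum.distrib)
      also have "(\<Sum>f\<in>{1..hh m}. if f \<in> AA m d then be * ?z (n - f) else 0)
          = (\<Sum>f\<in>{1..hh m} \<inter> AA m d. be * ?z (n - f))"
        by (simp add: sum.inter_restrict)
      also have "{1..hh m} \<inter> AA m d = AA m d" using Asub by blast
      also have "(\<Sum>f\<in>AA m d. be * ?z (n - f)) = be * Nz" unfolding Nz_def by (simp add: sum_distrib_left)
      finally show ?thesis .
    qed
    have zn: "?z n = step (Sz + be * Nz - theta2 m lam d)"
      using False split by (subst zs.simps) simp
    have IH: "(?z k = 0 \<or> ?z k = 1) \<and> ?z k \<le> ys m k \<and> (d < k mod ?r \<longrightarrow> ?z k = ys m k)" if "k < n" for k
      using less that by blast
    have Sz_eq: "Sz = (\<Sum>j\<in>{1..?K}. abar m j * ?z (n - ?r * j))"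
      unfolding Sz_def by (rule bb_reindex[OF r])
    have be0: "be \<le> 0" unfolding be_def betad_def using lam0 by (simp add: divide_nonpos_nonneg)
    have zlt: "n - g < n" if "g \<in> AA m d" for g
    proof -
      have "1 \<le> g" "g \<le> hh m" using Asub that by auto
      then show ?thesis using n by linarith
    qed
    have Nz0: "0 \<le> Nz" unfolding Nz_def
    proof (rule sum_nonneg)
      fix g assume "g \<in> AA m d"
      then show "0 \<le> ?z (n - g)" using IH[OF zlt] by fastforce
    qed
    have th2: "theta2 m lam d = 2 * real ?r + lam - be / 8"
      unfolding theta2_def xid_def thetabar_def be_def by simp
    let ?i = "n mod ?r" let ?T = "1 + n div ?r"
    have i: "?i < ?r" using r by simp
    have kd: "?K \<le> n div ?r"
    proof -
      have "?r * ?K \<le> n" using n by (simp add: hh_def)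
      then show ?thesis using r by (metis div_le_mono nonzero_mult_div_cancel_left neq0_conv)
    qed
    then have T: "?K \<le> ?T" by simp
    show ?thesis
    proof (cases "ys m n = 1")
      case False
      then have y0: "ys m n = 0" using ys_vals[OF m r2] by blast
      then have p0: "ph m ?i ?T = 0" using ys_char[OF m r2, of n] by simp
      have "Sz \<le> 2 * real ?r - 2" unfolding Sz_eq
      proof (rule KB[OF r2 i T p0])
        fix j assume j: "j \<in> {1..?K}"
        have "n - ?r * j < n" using ys_shift[OF m r2 n j] by simp
        then show "0 \<le> ?z (n - ?r * j) \<and> ?z (n - ?r * j) \<le> ph m ?i (?T - j)"
          using IH[of "n - ?r * j"] ys_shift[OF m r2 n j] by auto
      qed
      moreover have "be * Nz \<le> 0" using be0 Nz0 by (simp add: mult_nonpos_nonneg)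
      ultimately have "Sz + be * Nz - theta2 m lam d < 0" using th2 lam1 be0 by simp
      then have "?z n = 0" using zn by (simp add: step_def)
      then show ?thesis using y0 by simp
    next
      case True
      have zv: "?z n = 0 \<or> ?z n = 1" using zn step_vals by simp
      have eq: "?z n = ys m n" if dn: "d < n mod ?r"
      proof -
        have "Sz = (\<Sum>j\<in>{1..?K}. abar m j * ph m ?i (?T - j))" unfolding Sz_eq
        proof (rule sum.cong[OF refl])
          fix j assume j: "j \<in> {1..?K}"
          have "?z (n - ?r * j) = ys m (n - ?r * j)"
            using IH[of "n - ?r * j"] ys_shift[OF m r2 n j] dn by auto
          then show "abar m j * ?z (n - ?r * j) = abar m j * ph m ?i (?T - j)"
            using ys_shift[OF m r2 n j] by simp
        qed
        also have "\<dots> = 2 * real ?r"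
          using KA[OF r2 i T] True ys_char[OF m r2, of n] by simp
        finally have Sz2: "Sz = 2 * real ?r" .
        have Tot: "?r * ?r \<le> Tot m d" using Tot_bound[OF m r2 dr] .
        have Tpos: "real (Tot m d) > 0" using Tot r by (metis of_nat_0_less_iff mult_pos_pos less_le_trans)
        have "d + 1 \<le> ?r - 1" using dn i by linarith
        then have "?r * (d + 1) \<le> ?r * (?r - 1)" by (rule mult_left_mono) simp
        also have "\<dots> < ?r * ?r" using r by simp
        finally have Nb: "?r * (d+1) + 1 \<le> Tot m d" using Tot by linarith
        have "Nz \<le> (\<Sum>g\<in>AA m d. ys m (n - g))" unfolding Nz_def
        proof (rule sum_mono)
          fix g assume "g \<in> AA m d"
          then show "?z (n - g) \<le> ys m (n - g)" using IH[OF zlt] by blast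
        qed
        also have "\<dots> = (\<Sum>g\<in>AA m d. if ys m (n - g) = 1 then 1 else 0)"
          by (rule sum.cong[OF refl]) (use ys_vals[OF m r2] in \<open>metis\<close>)
        also have "\<dots> = (\<Sum>g\<in>{g \<in> AA m d. ys m (n - g) = 1}. 1)"
          by (rule sum.inter_filter[symmetric, OF finA])
        also have "\<dots> = real (card {g \<in> AA m d. ys m (n - g) = 1})" by simp
        also have "\<dots> \<le> real (?r * (d + 1))" using N_bound[OF m r2 dr n dn] by linarith
        finally have "Nz + 1 \<le> real (Tot m d)" using Nb by linarith
        then have q: "(Nz + 1/8) / real (Tot m d) \<le> 1" using Tpos by (simp add: divide_le_eq)
        have "Sz + be * Nz - theta2 m lam d = be * (Nz + 1/8) - lam"
          using Sz2 th2 by (simp add: algebra_simps)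
        also have "\<dots> = lam * ((Nz + 1/8) / real (Tot m d) - 1)"
          unfolding be_def betad_def using Tpos by (simp add: field_simps)
        also have "\<dots> \<ge> 0" using q lam0 by (intro mult_nonpos_nonpos) auto
        finally have "?z n = 1" using zn by (simp add: step_def)
        then show ?thesis using True by simp
      qed
      show ?thesis using zv True eq by auto
    qed
  qed
qed

theorem lemma19:
  fixes m d t :: nat and lam :: real
  assumes "m > 0" and "rho m \<ge> 2"
    and "-1 \<le> lam" and "lam < 0"
    and "d \<le> rho m - 1"
    and "L1 m d + hh m - rho m + d + 1 \<le> t" and "t \<le> L1 m d + hh m - 1"
  shows "zs m lam t d = ys m t"
proof -
  let ?r = "rho m"
  have r: "?r > 0" using assms(2) by simp
  have kp: "kk m > 0" using kk_pos[OF assms(1,2)] .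
  define q where "q = Lcm (pr m ` {..d}) + kk m - 1"
  have e1: "L1 m d + hh m = ?r * (Lcm (pr m ` {..d}) + kk m)" by (simp add: L1_def hh_def algebra_simps)
  have e2: "q + 1 = Lcm (pr m ` {..d}) + kk m" using kp by (simp add: q_def)
  have e: "L1 m d + hh m = ?r * q + ?r" using e1 e2 by (metis mult.commute mult_Suc Suc_eq_plus1 add.commute)
  define e where "e = t - ?r * q"
  have t1: "?r * q + d + 1 \<le> t" "t \<le> ?r * q + ?r - 1" using assms(6,7) e by auto
  have te: "t = e + ?r * q" unfolding e_def using t1 by simp
  have "e < ?r" "d < e" using t1 te r by auto
  then have "t mod ?r = e" using te by simp
  then have "d < t mod ?r" using \<open>d < e\<close> by simp
  then show ?thesis using Z[OF assms(1-5), of t] by simp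
qed

end
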